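(* For every tree $T$ with at least one edge, $sr(T)=\lceil \Delta(T)/2\rceil$, where $\Delta(T)$ is the maximum degree of $T$.
   Context: All graphs are finite, simple and undirected. For a set $E'$ of edges of a graph, the subgraph induced by $E'$ is the graph whose edge set is $E'$ and whose vertex set is the set of endpoints of edges in $E'$. A graph is semiregular (a $[d,d+1]$-graph) if there is an integer $d$ such that every vertex has degree $d$ or $d+1$. The semiregular number $sr(G)$ of a graph $G$ is the minimum number of subsets into which $E(G)$ can be partitioned so that the subgraph induced by each subset is semiregular. *)

theory Defs
  imports Main
begin

text \<open>A finite simple graph is represented by its edge set E, a finite set of
  2-element vertex sets. Its vertex set is taken to be the union of the edges
  (a tree with at least one edge has no isolated vertices).\<close>

definition simple_graph :: "'a set set \<Rightarrow> bool" where
  "simple_graph E \<longleftrightarrow> finite E \<and> (\<forall>e\<in>E. card e = 2)"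

definition verts :: "'a set set \<Rightarrow> 'a set" where
  "verts E = \<Union>E"

definition degree :: "'a set set \<Rightarrow> 'a \<Rightarrow> nat" where
  "degree E v = card {e\<in>E. v \<in> e}"

definition max_degree :: "'a set set \<Rightarrow> nat" where
  "max_degree E = Max (degree E ` verts E)"

definition is_walk :: "'a set set \<Rightarrow> 'a list \<Rightarrow> bool" where
  "is_walk E xs \<longleftrightarrow> xs \<noteq> [] \<and> set xs \<subseteq> verts E \<and>
     (\<forall>i. Suc i < length xs \<longrightarrow> {xs ! i, xs ! Suc i} \<in> E)"

definition connected_graph :: "'a set set \<Rightarrow> bool" where
  "connected_graph E \<longleftrightarrow>
     (\<forall>u\<in>verts E. \<forall>v\<in>verts E. \<exists>xs. is_walk E xs \<and> hd xs = u \<and> last xs = v)"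

definition is_cycle :: "'a set set \<Rightarrow> 'a list \<Rightarrow> bool" where
  "is_cycle E xs \<longleftrightarrow> length xs \<ge> 3 \<and> distinct xs \<and> is_walk E xs \<and>
     {last xs, hd xs} \<in> E"

definition is_tree :: "'a set set \<Rightarrow> bool" where
  "is_tree E \<longleftrightarrow> simple_graph E \<and> connected_graph E \<and> (\<nexists>xs. is_cycle E xs)"

text \<open>The subgraph induced by an edge set F has edge set F and vertex set the
  endpoints of F; it is semiregular if all its vertex degrees are d or d+1.\<close>
definition semiregular :: "'a set set \<Rightarrow> bool" where
  "semiregular F \<longleftrightarrow> (\<exists>d. \<forall>v\<in>verts F. degree F v = d \<or> degree F v = d + 1)"

text \<open>Partition of E into k classes given by a colouring f : E \<rightarrow> {0..<k};
  empty classes are allowed, which does not affect the minimum.\<close>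
definition sr_partition :: "'a set set \<Rightarrow> nat \<Rightarrow> bool" where
  "sr_partition E k \<longleftrightarrow> (\<exists>f :: 'a set \<Rightarrow> nat.
      (\<forall>e\<in>E. f e < k) \<and> (\<forall>i<k. semiregular {e\<in>E. f e = i}))"

definition semiregular_number :: "'a set set \<Rightarrow> nat" where
  "semiregular_number E = (LEAST k. sr_partition E k)"

end

theory Submission imports Defs begin

lemma degree_pos:
  assumes "finite F" "v \<in> verts F"
  shows "degree F v \<ge> 1"
proof -
  obtain e where "e \<in> F" "v \<in> e" using assms(2) unfolding verts_def by auto
  hence "{e\<in>F. v \<in> e} \<noteq> {}" by auto
  moreover have "finite {e\<in>F. v \<in> e}" using assms(1) by simp
  ultimately show ?thesis unfolding degree_def by (simp add: Suc_le_eq card_gt_0_iff)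
qed

lemma leaf_exists:
  assumes T: "is_tree T" and FT: "F \<subseteq> T" and ne: "F \<noteq> {}"
  shows "\<exists>v\<in>verts F. degree F v = 1"
proof (rule ccontr)
  assume nl: "\<not> ?thesis"
  have finF: "finite F" using T FT unfolding is_tree_def simple_graph_def by (auto intro: finite_subset)
  have c2: "\<forall>e\<in>F. card e = 2" using T FT unfolding is_tree_def simple_graph_def by auto
  have nocyc: "\<nexists>xs. is_cycle T xs" using T unfolding is_tree_def by auto
  have deg2: "\<forall>v\<in>verts F. degree F v \<ge> 2"
    using degree_pos[OF finF] nl by (metis One_nat_def Suc_1 Suc_le_eq le_neq_implies_less)
  have vFT: "verts F \<subseteq> verts T" unfolding verts_def using FT by auto
  define P where "P = {xs. distinct xs \<and> is_walk F xs}"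
  have fe: "\<forall>e\<in>F. finite e" using c2 by (metis card.infinite zero_neq_numeral)
  have finV: "finite (verts F)" unfolding verts_def using finF fe by auto
  have lenb: "\<forall>xs\<in>P. length xs \<le> card (verts F)"
  proof
    fix xs assume "xs \<in> P"
    hence "distinct xs" "set xs \<subseteq> verts F" unfolding P_def is_walk_def by auto
    thus "length xs \<le> card (verts F)" using finV by (metis card_mono distinct_card)
  qed
  obtain e0 where "e0 \<in> F" using ne by auto
  then obtain a b where ab: "{a,b} \<in> F" "a \<noteq> b" using c2 by (metis card_2_iff)
  have abP: "[a,b] \<in> P" unfolding P_def is_walk_def verts_def using ab
    by (auto simp: less_Suc_eq)
  define n where "n = Max (length ` P)"
  have finL: "finite (length ` P)" using lenb
    by (metis (no_types, lifting) finite_atMost finite_subset image_subset_iff atMost_iff)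
  have "n \<in> length ` P" unfolding n_def using finL abP by (intro Max_in) auto
  then obtain xs where xs: "xs \<in> P" "length xs = n" by auto
  have nmax: "\<forall>ys\<in>P. length ys \<le> n" unfolding n_def using finL by auto
  have n2: "n \<ge> 2" using nmax abP by fastforce
  have dxs: "distinct xs" and wxs: "is_walk F xs" using xs unfolding P_def by auto
  have setxs: "set xs \<subseteq> verts F" and stp: "\<And>i. Suc i < n \<Longrightarrow> {xs!i, xs!Suc i} \<in> F"
    using wxs xs(2) unfolding is_walk_def by auto
  define v where "v = xs ! (n-1)"
  define u where "u = xs ! (n-2)"
  have uvF: "{u,v} \<in> F" using stp[of "n-2"] n2 unfolding u_def v_def
    by (metis Suc_diff_Suc Suc_1 diff_Suc_1 diff_less le_less_trans lessI less_2_cases_iff zero_less_diff numeral_2_eq_2 nat_less_le)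
  have vV: "v \<in> verts F" using setxs n2 xs(2) unfolding v_def by auto
  have "degree F v \<ge> 2" using deg2 vV by auto
  have "\<exists>e'\<in>F. v \<in> e' \<and> e' \<noteq> {u,v}"
  proof (rule ccontr)
    assume "\<not> ?thesis"
    hence "{e\<in>F. v \<in> e} \<subseteq> {{u,v}}" by auto
    hence "card {e\<in>F. v \<in> e} \<le> 1" by (metis card.empty card.insert card_mono empty_iff finite.emptyI finite.insertI le_zero_eq One_nat_def)
    thus False using \<open>degree F v \<ge> 2\<close> unfolding degree_def by auto
  qed
  then obtain e' where e': "e' \<in> F" "v \<in> e'" "e' \<noteq> {u,v}" by auto
  obtain w where e'eq: "e' = {v,w}" "w \<noteq> v"
  proof -
    obtain x y where "e' = {x,y}" "x \<noteq> y" using c2 e' by (metis card_2_iff)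
    thus ?thesis using that e'(2) by (metis insert_commute insert_iff singletonD)
  qed
  have wu: "w \<noteq> u" using e'(3) e'eq by (metis insert_commute)
  show False
  proof (cases "w \<in> set xs")
    case True
    then obtain j where j: "j < n" "xs!j = w" by (metis in_set_conv_nth xs(2))
    have "j \<noteq> n-1" using j e'eq(2) unfolding v_def by auto
    moreover have "j \<noteq> n-2" using j wu unfolding u_def by auto
    ultimately have j3: "j + 3 \<le> n" using j(1) by linarith
    define ys where "ys = drop j xs"
    have "is_cycle T ys"
      unfolding is_cycle_def is_walk_def
    proof (intro conjI allI impI)
      show "3 \<le> length ys" using j3 xs(2) unfolding ys_def by simp
      show "distinct ys" using dxs unfolding ys_def by simp
      show "ys \<noteq> []" using j xs(2) unfolding ys_def by simp
      show "set ys \<subseteq> verts T" using setxs vFT set_drop_subset unfolding ys_def by fastforce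
      fix i assume "Suc i < length ys"
      hence "Suc (j+i) < n" using xs(2) unfolding ys_def by simp
      hence "{xs!(j+i), xs!Suc (j+i)} \<in> F" by (rule stp)
      thus "{ys!i, ys!Suc i} \<in> T" using FT j xs(2) unfolding ys_def by auto
    next
      have "last ys = v" unfolding ys_def v_def using j xs(2) by (simp add: last_conv_nth)
      moreover have "hd ys = w" unfolding ys_def using j xs(2) by (simp add: hd_drop_conv_nth)
      ultimately show "{last ys, hd ys} \<in> T" using e' e'eq FT by auto
    qed
    thus False using nocyc by auto
  next
    case False
    have "xs @ [w] \<in> P" unfolding P_def is_walk_def
    proof (intro CollectI conjI allI impI)
      show "distinct (xs @ [w])" using dxs False by simp
      show "xs @ [w] \<noteq> []" by simp
      show "set (xs @ [w]) \<subseteq> verts F" using setxs e' e'eq unfolding verts_def by auto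
      fix i assume i: "Suc i < length (xs @ [w])"
      show "{(xs @ [w]) ! i, (xs @ [w]) ! Suc i} \<in> F"
      proof (cases "Suc i < n")
        case True thus ?thesis using stp[OF True] xs(2) by (simp add: nth_append)
      next
        case False
        hence "i = n - 1" using i xs(2) by simp
        thus ?thesis using e' e'eq n2 xs(2) unfolding v_def by (simp add: nth_append)
      qed
    qed
    thus False using nmax xs(2) by fastforce
  qed
qed


lemma card_split:
  assumes "finite A" "\<forall>x\<in>A. g x < (k::nat)"
  shows "card A = (\<Sum>i<k. card {x\<in>A. g x = i})"
proof -
  have "A = (\<Union>i\<in>{..<k}. {x\<in>A. g x = i})" using assms(2) by auto
  hence "card A = card (\<Union>i\<in>{..<k}. {x\<in>A. g x = i})" by simp
  also have "\<dots> = (\<Sum>i<k. card {x\<in>A. g x = i})"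
    using assms(1) by (intro card_UN_disjoint) auto
  finally show ?thesis .
qed

lemma coloring:
  assumes T: "is_tree T"
  shows "F \<subseteq> T \<Longrightarrow> (\<forall>v. degree F v \<le> 2*k) \<Longrightarrow>
    \<exists>f. (\<forall>e\<in>F. f e < k) \<and> (\<forall>v. \<forall>i<k. card {e\<in>F. v\<in>e \<and> f e = i} \<le> 2)"
proof (induction "card F" arbitrary: F rule: less_induct)
  case less
  have finT: "finite T" and c2: "\<forall>e\<in>T. card e = 2" using T unfolding is_tree_def simple_graph_def by auto
  have finF: "finite F" using less.prems finT finite_subset by auto
  show ?case
  proof (cases "F = {}")
    case True thus ?thesis by auto
  next
    case False
    obtain v where v: "v \<in> verts F" "degree F v = 1" using leaf_exists[OF T less.prems(1) False] by auto
    obtain e where ev: "{x\<in>F. v \<in> x} = {e}" using v(2) unfolding degree_def by (metis card_1_singletonE)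
    have eF: "e \<in> F" and ve: "v \<in> e" using ev by auto
    obtain u where eu: "e = {v,u}" "u \<noteq> v"
    proof -
      obtain x y where "e = {x,y}" "x \<noteq> y" using c2 eF less.prems(1) by (metis card_2_iff subsetD)
      thus ?thesis using that ve by (metis insert_commute insert_iff singletonD)
    qed
    define F' where "F' = F - {e}"
    have lt: "card F' < card F" unfolding F'_def using finF eF by (rule card_Diff1_less)
    have F'T: "F' \<subseteq> T" using less.prems(1) unfolding F'_def by auto
    have degF': "\<forall>w. degree F' w \<le> 2*k"
    proof
      fix w
      have "degree F' w \<le> degree F w" unfolding degree_def F'_def using finF
        by (intro card_mono) auto
      thus "degree F' w \<le> 2*k" using less.prems(2) by (meson le_trans)
    qed
    obtain f' where f': "\<forall>e\<in>F'. f' e < k" "\<forall>w. \<forall>i<k. card {e\<in>F'. w\<in>e \<and> f' e = i} \<le> 2"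
      using less.hyps[OF lt F'T degF'] by auto
    have finF': "finite F'" using finF unfolding F'_def by auto
    have du: "degree F' u = degree F u - 1"
    proof -
      have "{x\<in>F'. u \<in> x} = {x\<in>F. u \<in> x} - {e}" unfolding F'_def by auto
      moreover have "e \<in> {x\<in>F. u \<in> x}" using eF eu by auto
      ultimately show ?thesis unfolding degree_def using finF by (simp add: card_Diff_singleton)
    qed
    have du1: "degree F u \<ge> 1" using degree_pos[OF finF, of u] eF eu unfolding verts_def by auto
    have "\<exists>i<k. card {x\<in>F'. u\<in>x \<and> f' x = i} \<le> 1"
    proof (rule ccontr)
      assume "\<not> ?thesis"
      hence ge: "\<forall>i<k. card {x\<in>F'. u\<in>x \<and> f' x = i} \<ge> 2" by auto
      have "degree F' u = (\<Sum>i<k. card {x\<in>{x\<in>F'. u \<in> x}. f' x = i})"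
        unfolding degree_def using finF' f'(1) by (intro card_split) auto
      also have "\<dots> = (\<Sum>i<k. card {x\<in>F'. u\<in>x \<and> f' x = i})"
        by (intro sum.cong refl arg_cong[where f=card]) auto
      also have "\<dots> \<ge> (\<Sum>i<k. 2)" using ge by (intro sum_mono) auto
      finally have "degree F' u \<ge> 2*k" by simp
      thus False using du du1 less.prems(2)[rule_format, of u] by linarith
    qed
    then obtain i where i: "i < k" "card {x\<in>F'. u\<in>x \<and> f' x = i} \<le> 1" by auto
    define f where "f = f'(e := i)"
    have vF': "{x\<in>F'. v \<in> x} = {}" using ev unfolding F'_def by auto
    show ?thesis
    proof (intro exI[of _ f] conjI allI impI ballI)
      fix x assume "x \<in> F" thus "f x < k" using f'(1) i unfolding f_def F'_def by auto
    next
      fix w j assume j: "j < k"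
      show "card {x\<in>F. w\<in>x \<and> f x = j} \<le> 2"
      proof (cases "w \<in> e \<and> j = i")
        case True
        have eq: "{x\<in>F. w\<in>x \<and> f x = j} = insert e {x\<in>F'. w\<in>x \<and> f' x = j}"
          using True eF unfolding f_def F'_def by auto
        have "card {x\<in>F. w\<in>x \<and> f x = j} \<le> Suc (card {x\<in>F'. w\<in>x \<and> f' x = j})"
          unfolding eq using finF' by (simp add: card_insert_le_m1 card_insert_if)
        moreover have "card {x\<in>F'. w\<in>x \<and> f' x = j} \<le> 1"
        proof (cases "w = v")
          case True
          hence "{x\<in>F'. w\<in>x \<and> f' x = j} = {}" using vF' by auto
          thus ?thesis by (metis card.empty zero_le_one)
        next
          case False
          hence "w = u" using \<open>w \<in> e \<and> j = i\<close> eu by auto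
          thus ?thesis using i \<open>w \<in> e \<and> j = i\<close> by auto
        qed
        ultimately show ?thesis by linarith
      next
        case False
        have eq: "{x\<in>F. w\<in>x \<and> f x = j} = {x\<in>F'. w\<in>x \<and> f' x = j}"
          using False unfolding f_def F'_def by auto
        show ?thesis unfolding eq using f'(2) j by auto
      qed
    qed
  qed
qed


lemma semireg_le2:
  assumes T: "is_tree T" and CT: "C \<subseteq> T" and sr: "semiregular C"
  shows "degree C v \<le> 2"
proof (cases "C = {}")
  case True thus ?thesis unfolding degree_def by simp
next
  case False
  obtain w where w: "w \<in> verts C" "degree C w = 1" using leaf_exists[OF T CT False] by auto
  obtain d where d: "\<forall>x\<in>verts C. degree C x = d \<or> degree C x = d + 1" using sr unfolding semiregular_def by auto
  have "degree C w = d \<or> degree C w = d + 1" using d w(1) by blast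
  hence "d \<le> 1" using w(2) by linarith
  show ?thesis
  proof (cases "v \<in> verts C")
    case True
    hence "degree C v = d \<or> degree C v = d + 1" using d by blast
    thus ?thesis using \<open>d \<le> 1\<close> by linarith
  next
    case False
    hence "{e\<in>C. v \<in> e} = {}" unfolding verts_def by auto
    thus ?thesis unfolding degree_def by (metis card.empty zero_le)
  qed
qed

theorem theorem3:
  fixes T :: "'a set set"
  assumes "is_tree T" and "T \<noteq> {}"
  shows "semiregular_number T = (max_degree T + 1) div 2"
proof -
  define k where "k = (max_degree T + 1) div 2"
  have finT: "finite T" and c2: "\<forall>e\<in>T. card e = 2" using assms(1) unfolding is_tree_def simple_graph_def by auto
  have fe: "\<forall>e\<in>T. finite e" using c2 by (metis card.infinite zero_neq_numeral)
  have finV: "finite (verts T)" unfolding verts_def using finT fe by auto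
  have neV: "verts T \<noteq> {}"
  proof -
    obtain e where e: "e \<in> T" using assms(2) by auto
    hence "e \<noteq> {}" using c2 by fastforce
    then obtain x where "x \<in> e" by auto
    thus ?thesis using e unfolding verts_def by auto
  qed
  have degle: "\<forall>v. degree T v \<le> 2*k"
  proof
    fix v
    show "degree T v \<le> 2*k"
    proof (cases "v \<in> verts T")
      case True
      hence "degree T v \<le> max_degree T" unfolding max_degree_def using finV by auto
      thus ?thesis unfolding k_def by linarith
    next
      case False
      hence "{e\<in>T. v \<in> e} = {}" unfolding verts_def by auto
      thus ?thesis unfolding degree_def by (metis card.empty zero_le)
    qed
  qed
  have up: "sr_partition T k"
  proof -
    obtain f where f: "\<forall>e\<in>T. f e < k" "\<forall>v. \<forall>i<k. card {e\<in>T. v\<in>e \<and> f e = i} \<le> 2"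
      using coloring[OF assms(1) order_refl degle] by auto
    show ?thesis unfolding sr_partition_def
    proof (intro exI[of _ f] conjI allI impI)
      show "\<forall>e\<in>T. f e < k" using f(1) .
      fix i assume i: "i < k"
      show "semiregular {e \<in> T. f e = i}" unfolding semiregular_def
      proof (intro exI[of _ 1] ballI)
        fix w assume w: "w \<in> verts {e \<in> T. f e = i}"
        have "degree {e \<in> T. f e = i} w \<ge> 1" using degree_pos[OF _ w] finT by auto
        moreover have "degree {e \<in> T. f e = i} w = card {e\<in>T. w\<in>e \<and> f e = i}"
          unfolding degree_def by (intro arg_cong[where f=card]) auto
        moreover have "card {e\<in>T. w\<in>e \<and> f e = i} \<le> 2" using f(2) i by blast
        ultimately show "degree {e \<in> T. f e = i} w = 1 \<or> degree {e \<in> T. f e = i} w = 1 + 1"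
          by arith
      qed
    qed
  qed
  have low: "k \<le> m" if m: "sr_partition T m" for m
  proof -
    obtain f where f: "\<forall>e\<in>T. f e < m" "\<forall>i<m. semiregular {e\<in>T. f e = i}"
      using m unfolding sr_partition_def by auto
    obtain v where v: "v \<in> verts T" "degree T v = max_degree T"
    proof -
      have "max_degree T \<in> degree T ` verts T" unfolding max_degree_def
        using finV neV by (intro Max_in) auto
      thus ?thesis using that by auto
    qed
    have "degree T v = (\<Sum>i<m. card {x\<in>{e\<in>T. v \<in> e}. f x = i})"
      unfolding degree_def using finT f(1) by (intro card_split) auto
    also have "\<dots> = (\<Sum>i<m. degree {e\<in>T. f e = i} v)"
      unfolding degree_def by (intro sum.cong refl arg_cong[where f=card]) auto
    also have "\<dots> \<le> (\<Sum>i<m. 2)"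
      using f(2) by (intro sum_mono semireg_le2[OF assms(1)]) auto
    finally have "max_degree T \<le> 2*m" using v by simp
    thus ?thesis unfolding k_def by linarith
  qed
  have "semiregular_number T = k" unfolding semiregular_number_def
    using up low by (intro Least_equality) auto
  thus ?thesis unfolding k_def .
qed

end
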